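(* If $(\mathbb T,\zeta,v,\sigma)$ is a vertex of the Yang–Baxter graph $G_\lambda^{q,s}$, then $\sigma=r_v$ and $\zeta[i]=q^{v[i]}s^{\mathrm{CT}_{\mathbb T}[\sigma[i]]}$ for $1\leq i\leq N$. (This $\zeta$ is denoted $\zeta_{v,\mathbb T}$.)
   Context: Let $\lambda$ be a partition of $N$. A reverse standard tableau (RST) of shape $\lambda$ is a filling of $\lambda$ with $1,\dots,N$ strictly decreasing along rows and columns; $\mathrm{Tab}_\lambda$ is the set of them. For an RST $\mathbb T$, $\mathrm{CT}_{\mathbb T}[i]=\mathrm{COL}_{\mathbb T}[i]-\mathrm{ROW}_{\mathbb T}[i]$ is the content of the cell containing $i$. For $v\in\mathbb N^N$, the rank function is $r_v[i]=\#\{j\leq i: v[j]\geq v[i]\}+\#\{j>i: v[j]>v[i]\}$, viewed as a permutation. The graph $G_\lambda^{q,s}$ has vertices labeled by 4-tuples $(\mathbb T,\zeta,v,\sigma)$ with $\mathbb T$ an RST, $\zeta$ a vector of length $N$, $v\in\mathbb N^N$, $\sigma\in\mathfrak S_N$. Its root is $(\mathbb T_\lambda,\mathrm{CT}^s_{\mathbb T_\lambda},[0^N],[1,\dots,N])$, where $\mathbb T_\lambda$ is the tableau obtained by filling $\lambda$ from bottom to top and left to right with $1,\dots,N$ in decreasing order and $\mathrm{CT}^s_{\mathbb T}[i]=s^{\mathrm{CT}_{\mathbb T}[i]}$. Transpositions act by $(\mathbb T,\zeta,v,\sigma)s_i=(\mathbb T,\zeta s_i,vs_i,\sigma s_i)$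 if $v[i]\neq v[i+1]$; $=(\mathbb T^{(\sigma[i],\sigma[i+1])},\zeta s_i,v,\sigma)$ if $v[i]=v[i+1]$ and $\mathbb T^{(\sigma[i],\sigma[i+1])}$ (entries $\sigma[i],\sigma[i+1]$ swapped) is an RST; and $=(\mathbb T,\zeta,v,\sigma)$ otherwise. The affine action is $(\mathbb T,\zeta,v,\sigma)\Psi=(\mathbb T,[\zeta[2],\dots,\zeta[N],q\zeta[1]],[v[2],\dots,v[N],v[1]+1],[\sigma_2,\dots,\sigma_N,\sigma_1])$. The vertices of $G_\lambda^{q,s}$ are obtained from the root by adding an arrow $s_i$ to the image under $s_i$ when $v[i]<v[i+1]$, or when $v[i]=v[i+1]$ and the new tableau is obtained by interchanging two integers $k<\ell$ with $\mathrm{CT}_{\mathbb T}(k)\geq\mathrm{CT}_{\mathbb T}(\ell)+2$; and adding an arrow $\Psi$ to the image under $\Psi$ (arrows $s_i$ that fix the vertex go to $\emptyset$). *)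

theory Defs
  imports Main
begin

(* Partitions: list of positive parts, weakly decreasing, summing to N. Rows/columns are 0-indexed. *)
definition is_partition :: "nat list \<Rightarrow> nat \<Rightarrow> bool" where
  "is_partition lam N \<longleftrightarrow> sorted_wrt (\<ge>) lam \<and> (\<forall>p\<in>set lam. 0 < p) \<and> sum_list lam = N"

definition cells :: "nat list \<Rightarrow> (nat \<times> nat) set" where
  "cells lam = {(r, c). r < length lam \<and> c < lam ! r}"

(* A tableau is a filling T r c of the cells; outside the shape the value is 0 (canonical form). *)
type_synonym tableau = "nat \<Rightarrow> nat \<Rightarrow> nat"

definition is_RST :: "nat list \<Rightarrow> nat \<Rightarrow> tableau \<Rightarrow> bool" where
  "is_RST lam N T \<longleftrightarrow>
     bij_betw (\<lambda>(r, c). T r c) (cells lam) {1..N} \<and>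
     (\<forall>r c. (r, c) \<notin> cells lam \<longrightarrow> T r c = 0) \<and>
     (\<forall>r c. (r, Suc c) \<in> cells lam \<longrightarrow> T r c > T r (Suc c)) \<and>
     (\<forall>r c. (Suc r, c) \<in> cells lam \<longrightarrow> T r c > T (Suc r) c)"

definition cell_of :: "nat list \<Rightarrow> tableau \<Rightarrow> nat \<Rightarrow> nat \<times> nat" where
  "cell_of lam T i = (THE rc. rc \<in> cells lam \<and> T (fst rc) (snd rc) = i)"

definition CT :: "nat list \<Rightarrow> tableau \<Rightarrow> nat \<Rightarrow> int" where
  "CT lam T i = int (snd (cell_of lam T i)) - int (fst (cell_of lam T i))"

(* T_lambda: rows filled from bottom to top with 1..N, decreasing left to right in each row *)
definition T_lam :: "nat list \<Rightarrow> nat \<Rightarrow> tableau" where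
  "T_lam lam N = (\<lambda>r c. if (r, c) \<in> cells lam then N - sum_list (take r lam) - c else 0)"

definition swapT :: "tableau \<Rightarrow> nat \<Rightarrow> nat \<Rightarrow> tableau" where
  "swapT T a b = (\<lambda>r c. if T r c = a then b else if T r c = b then a else T r c)"

(* rank function r_v, positions 0-based in the list (position i+1 in the paper) *)
definition rank :: "nat list \<Rightarrow> nat list" where
  "rank v = map (\<lambda>i. card {j. j \<le> i \<and> j < length v \<and> v ! j \<ge> v ! i}
                      + card {j. i < j \<and> j < length v \<and> v ! j > v ! i}) [0..<length v]"

(* adjacent swap at 0-based positions k, k+1 (the transposition s_{k+1}) *)
definition swapL :: "'b list \<Rightarrow> nat \<Rightarrow> 'b list" where
  "swapL xs k = xs[k := xs ! Suc k, Suc k := xs ! k]"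

definition rot_q :: "'a::field \<Rightarrow> 'a list \<Rightarrow> 'a list" where
  "rot_q q z = (case z of [] \<Rightarrow> [] | a # zs \<Rightarrow> zs @ [q * a])"

definition rot_v :: "nat list \<Rightarrow> nat list" where
  "rot_v v = (case v of [] \<Rightarrow> [] | a # vs \<Rightarrow> vs @ [a + 1])"

type_synonym 'a vertex = "tableau \<times> 'a list \<times> nat list \<times> nat list"

(* vertices of the Yang-Baxter graph G_lambda^{q,s}; lists are indexed 0..N-1 for positions 1..N *)
inductive_set YB_vertices :: "nat list \<Rightarrow> nat \<Rightarrow> 'a::field \<Rightarrow> 'a \<Rightarrow> 'a vertex set"
  for lam :: "nat list" and N :: nat and q :: 'a and s :: 'a where
  root: "(T_lam lam N, map (\<lambda>i. s powi CT lam (T_lam lam N) i) [1..<Suc N],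
          replicate N 0, [1..<Suc N]) \<in> YB_vertices lam N q s"
| step_diff: "\<lbrakk>(T, z, v, \<sigma>) \<in> YB_vertices lam N q s; Suc k < N; v ! k < v ! Suc k\<rbrakk>
     \<Longrightarrow> (T, swapL z k, swapL v k, swapL \<sigma> k) \<in> YB_vertices lam N q s"
| step_eq: "\<lbrakk>(T, z, v, \<sigma>) \<in> YB_vertices lam N q s; Suc k < N; v ! k = v ! Suc k;
     is_RST lam N (swapT T (\<sigma> ! k) (\<sigma> ! Suc k));
     CT lam T (min (\<sigma> ! k) (\<sigma> ! Suc k)) \<ge> CT lam T (max (\<sigma> ! k) (\<sigma> ! Suc k)) + 2\<rbrakk>
     \<Longrightarrow> (swapT T (\<sigma> ! k) (\<sigma> ! Suc k), swapL z k, v, \<sigma>) \<in> YB_vertices lam N q s"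
| affine: "(T, z, v, \<sigma>) \<in> YB_vertices lam N q s
     \<Longrightarrow> (T, rot_q q z, rot_v v, rotate1 \<sigma>) \<in> YB_vertices lam N q s"

end

theory Submission
  imports Defs
begin

definition prec :: "nat list \<Rightarrow> nat \<Rightarrow> nat \<Rightarrow> bool" where
  "prec v j i \<longleftrightarrow> v!i < v!j \<or> (v!j = v!i \<and> j \<le> i)"

lemma rank_len[simp]: "length (rank v) = length v"
  by (simp add: rank_def)

lemma rank_alt: "i < length v \<Longrightarrow> rank v ! i = card {j. j < length v \<and> prec v j i}"
proof -
  assume i: "i < length v"
  let ?A = "{j. j \<le> i \<and> j < length v \<and> v ! j \<ge> v ! i}"
  let ?B = "{j. i < j \<and> j < length v \<and> v ! j > v ! i}"
  have "{j. j < length v \<and> prec v j i} = ?A \<union> ?B"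
    by (auto simp: prec_def)
  moreover have "card (?A \<union> ?B) = card ?A + card ?B"
    by (rule card_Un_disjoint) auto
  ultimately show ?thesis using i by (simp add: rank_def)
qed

lemma card_perm:
  assumes "bij_betw g {..<n} {..<n}"
  shows "card {j. j < n \<and> Q (g j)} = card {j. j < n \<and> Q j}"
proof -
  have "g ` {j. j < n \<and> Q (g j)} = {j. j < n \<and> Q j}"
  proof
    show "g ` {j. j < n \<and> Q (g j)} \<subseteq> {j. j < n \<and> Q j}"
      using assms bij_betwE by fastforce
    show "{j. j < n \<and> Q j} \<subseteq> g ` {j. j < n \<and> Q (g j)}"
    proof
      fix x assume "x \<in> {j. j < n \<and> Q j}"
      then have x: "x < n" "Q x" by auto
      then obtain y where "y < n" "g y = x" using assms
        by (metis bij_betw_iff_bijections lessThan_iff)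
      then show "x \<in> g ` {j. j < n \<and> Q (g j)}" using x by auto
    qed
  qed
  moreover have "inj_on g {j. j < n \<and> Q (g j)}"
    by (rule inj_on_subset[OF bij_betw_imp_inj_on[OF assms]]) auto
  ultimately show ?thesis using card_image by metis
qed

definition tk :: "nat \<Rightarrow> nat \<Rightarrow> nat" where
  "tk k j = (if j = k then Suc k else if j = Suc k then k else j)"

lemma tk_bij: "Suc k < n \<Longrightarrow> bij_betw (tk k) {..<n} {..<n}"
  by (rule bij_betw_byWitness[where f'="tk k"]) (auto simp: tk_def)

lemma swapL_nth: "Suc k < length xs \<Longrightarrow> j < length xs \<Longrightarrow> swapL xs k ! j = xs ! tk k j"
  by (auto simp: swapL_def tk_def nth_list_update)

lemma swapL_len[simp]: "length (swapL xs k) = length xs"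
  by (simp add: swapL_def)

lemma prec_swap:
  assumes "Suc k < length v" "v!k \<noteq> v!Suc k" "i < length v" "j < length v"
  shows "prec (swapL v k) j i = prec v (tk k j) (tk k i)"
proof -
  have e: "swapL v k ! j = v ! tk k j" "swapL v k ! i = v ! tk k i"
    using assms swapL_nth by auto
  have o: "v ! tk k j = v ! tk k i \<Longrightarrow> (j \<le> i) = (tk k j \<le> tk k i)"
    using assms(2) unfolding tk_def by (cases "j = k"; cases "j = Suc k"; cases "i = k"; cases "i = Suc k") auto
  show ?thesis unfolding prec_def e using o by auto
qed

lemma rank_swap:
  assumes "Suc k < length v" "v!k \<noteq> v!Suc k"
  shows "rank (swapL v k) = swapL (rank v) k"
proof (rule nth_equalityI)
  show "length (rank (swapL v k)) = length (swapL (rank v) k)" by simp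
  fix i assume "i < length (rank (swapL v k))"
  then have i: "i < length v" by simp
  have ti: "tk k i < length v" using i assms(1) by (auto simp: tk_def)
  have "rank (swapL v k) ! i = card {j. j < length v \<and> prec (swapL v k) j i}"
    using rank_alt[of i "swapL v k"] i by simp
  also have "{j. j < length v \<and> prec (swapL v k) j i} = {j. j < length v \<and> prec v (tk k j) (tk k i)}"
    using assms i prec_swap by auto
  also have "card \<dots> = card {j. j < length v \<and> prec v j (tk k i)}"
    by (rule card_perm[OF tk_bij[OF assms(1)]])
  also have "\<dots> = rank v ! tk k i" using rank_alt[OF ti] by simp
  also have "\<dots> = swapL (rank v) k ! i" using swapL_nth[of k "rank v" i] assms i by simp
  finally show "rank (swapL v k) ! i = swapL (rank v) k ! i" .
qed

lemma rank_rot: "rank (rot_v v) = rotate1 (rank v)"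
proof (cases v)
  case Nil then show ?thesis by (simp add: rot_v_def rank_def)
next
  case (Cons a vs)
  let ?n = "length v"
  define g where "g j = (if j = ?n - 1 then 0 else Suc j)" for j
  have gb: "bij_betw g {..<?n} {..<?n}"
    by (rule bij_betw_byWitness[where f'="\<lambda>j. if j = 0 then ?n - 1 else j - 1"])
       (auto simp: g_def Cons)
  have rv: "rot_v v = vs @ [a+1]" by (simp add: rot_v_def Cons)
  have nth1: "rot_v v ! j = (if j = ?n - 1 then v!0 + 1 else v ! Suc j)" if "j < ?n" for j
    using that by (auto simp: rot_v_def Cons nth_append)
  show ?thesis
  proof (rule nth_equalityI)
    show "length (rank (rot_v v)) = length (rotate1 (rank v))" by (simp add: rot_v_def Cons)
    fix i assume "i < length (rank (rot_v v))"
    then have i: "i < ?n" by (simp add: rot_v_def Cons)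
    have gi: "g i < ?n" using i by (auto simp: g_def)
    have "rank (rot_v v) ! i = card {j. j < ?n \<and> prec (rot_v v) j i}"
      using rank_alt[of i "rot_v v"] i by (simp add: rot_v_def Cons)
    also have "{j. j < ?n \<and> prec (rot_v v) j i} = {j. j < ?n \<and> prec v (g j) (g i)}"
    proof -
      have "prec (rot_v v) j i = prec v (g j) (g i)" if j: "j < ?n" for j
      proof (cases "j = ?n - 1")
        case True
        then show ?thesis using i j by (cases "i = ?n - 1") (auto simp: prec_def nth1 g_def)
      next
        case False
        then show ?thesis using i j by (cases "i = ?n - 1") (auto simp: prec_def nth1 g_def)
      qed
      then show ?thesis by auto
    qed
    also have "card \<dots> = card {j. j < ?n \<and> prec v j (g i)}"
      by (rule card_perm[OF gb])
    also have "\<dots> = rank v ! g i" using rank_alt[OF gi] by simp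
    also have "\<dots> = rotate1 (rank v) ! i"
      using i nth_rotate1[of i "rank v"] by (auto simp: g_def Cons)
    finally show "rank (rot_v v) ! i = rotate1 (rank v) ! i" .
  qed
qed

lemma rank_zero: "rank (replicate N 0) = [1..<Suc N]"
proof (rule nth_equalityI)
  show "length (rank (replicate N 0)) = length [1..<Suc N]" by simp
  fix i assume "i < length (rank (replicate N 0))"
  then have i: "i < N" by simp
  have "{j. j < N \<and> prec (replicate N 0) j i} = {..i}"
    using i by (auto simp: prec_def)
  then show "rank (replicate N 0) ! i = [1..<Suc N] ! i"
    using rank_alt[of i "replicate N 0"] i by (simp del: upt_Suc)
qed

lemma cell_of_swap:
  assumes "a \<noteq> b"
  shows "cell_of lam (swapT T a b) x = cell_of lam T (if x = a then b else if x = b then a else x)"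
proof -
  have "\<And>r c. (swapT T a b r c = x) = (T r c = (if x = a then b else if x = b then a else x))"
    using assms by (auto simp: swapT_def)
  then show ?thesis by (simp add: cell_of_def)
qed

lemma distinct_swapL: "Suc k < length xs \<Longrightarrow> distinct xs \<Longrightarrow> distinct (swapL xs k)"
  by (auto simp: swapL_def distinct_conv_nth nth_list_update)

lemma inv:
  assumes "(T, z, v, \<sigma>) \<in> YB_vertices lam N q s"
  shows "length z = N \<and> length v = N \<and> length \<sigma> = N \<and> distinct \<sigma> \<and> \<sigma> = rank v \<and>
         (\<forall>i<N. z ! i = q ^ (v ! i) * s powi CT lam T (\<sigma> ! i))"
  using assms
proof (induction rule: YB_vertices.induct)
  case root
  then show ?case by (simp add: rank_zero del: upt_Suc)
next
  case (step_diff T z v \<sigma> k)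
  have ne: "v ! k \<noteq> v ! Suc k" using step_diff.hyps(3) by simp
  have L: "length z = N" "length v = N" "length \<sigma> = N" using step_diff.IH by auto
  have "\<forall>i<N. swapL z k ! i = q ^ (swapL v k ! i) * s powi CT lam T (swapL \<sigma> k ! i)"
  proof (intro allI impI)
    fix i assume i: "i < N"
    have ti: "tk k i < N" using i step_diff.hyps(2) by (auto simp: tk_def)
    show "swapL z k ! i = q ^ (swapL v k ! i) * s powi CT lam T (swapL \<sigma> k ! i)"
      using swapL_nth[of k z i] swapL_nth[of k v i] swapL_nth[of k \<sigma> i] L i step_diff.hyps(2)
        step_diff.IH ti by simp
  qed
  moreover have "swapL \<sigma> k = rank (swapL v k)"
    using rank_swap[of k v] ne L step_diff.hyps(2) step_diff.IH by simp
  moreover have "distinct (swapL \<sigma> k)"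
  proof (rule distinct_swapL)
    show "Suc k < length \<sigma>" using L step_diff.hyps(2) by simp
    show "distinct \<sigma>" using step_diff.IH by blast
  qed
  ultimately show ?case using L by simp
next
  case (step_eq T z v \<sigma> k)
  have ab: "\<sigma>!k \<noteq> \<sigma>!Suc k" using step_eq.hyps(5) by auto
  have key: "(if \<sigma>!i = \<sigma>!k then \<sigma>!Suc k else if \<sigma>!i = \<sigma>!Suc k then \<sigma>!k else \<sigma>!i) = \<sigma> ! tk k i"
    if "i < N" for i
    using step_eq.IH step_eq.hyps(2) that
    by (auto simp: tk_def nth_eq_iff_index_eq)
  have vt: "v ! tk k i = v ! i" for i using step_eq.hyps(3) by (auto simp: tk_def)
  have "\<forall>i<N. swapL z k ! i = q ^ (v ! i) * s powi CT lam (swapT T (\<sigma>!k) (\<sigma>!Suc k)) (\<sigma> ! i)"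
  proof (intro allI impI)
    fix i assume i: "i < N"
    have ti: "tk k i < N" using i step_eq.hyps(2) by (auto simp: tk_def)
    have "swapL z k ! i = z ! tk k i" using swapL_nth step_eq.IH step_eq.hyps(2) i by auto
    also have "\<dots> = q ^ (v ! i) * s powi CT lam T (\<sigma> ! tk k i)" using step_eq.IH ti vt by auto
    also have "\<dots> = q ^ (v ! i) * s powi CT lam (swapT T (\<sigma>!k) (\<sigma>!Suc k)) (\<sigma> ! i)"
      using key[OF i] cell_of_swap[OF ab] by (simp add: CT_def)
    finally show "swapL z k ! i = q ^ (v ! i) * s powi CT lam (swapT T (\<sigma>!k) (\<sigma>!Suc k)) (\<sigma> ! i)" .
  qed
  moreover have "length (swapL z k) = N" using step_eq.IH by simp
  ultimately show ?case using step_eq.IH by blast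
next
  case (affine T z v \<sigma>)
  show ?case
  proof (cases N)
    case 0
    then show ?thesis using affine.IH by (simp add: rot_q_def rot_v_def rank_def)
  next
    case (Suc M)
    have "z \<noteq> []" using affine.IH Suc by auto
    then obtain z0 zs where zc: "z = z0 # zs" by (meson neq_Nil_conv)
    have "v \<noteq> []" using affine.IH Suc by auto
    then obtain v0 vs where vc: "v = v0 # vs" by (meson neq_Nil_conv)
    have "\<sigma> \<noteq> []" using affine.IH Suc by auto
    then obtain s0 ss where sc: "\<sigma> = s0 # ss" by (meson neq_Nil_conv)
    have L: "length zs = M" "length vs = M" "length ss = M" using affine.IH Suc zc vc sc by auto
    have H: "\<forall>i<N. z ! i = q ^ (v ! i) * s powi CT lam T (\<sigma> ! i)" using affine.IH by blast
    have "\<forall>i<N. rot_q q z ! i = q ^ (rot_v v ! i) * s powi CT lam T (rotate1 \<sigma> ! i)"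
    proof (intro allI impI)
      fix i assume i: "i < N"
      show "rot_q q z ! i = q ^ (rot_v v ! i) * s powi CT lam T (rotate1 \<sigma> ! i)"
      proof (cases "i = M")
        case True
        then show ?thesis using H[rule_format, of 0] Suc L
          by (simp add: zc vc sc rot_q_def rot_v_def nth_append)
      next
        case False
        then have "i < M" using i Suc by simp
        then show ?thesis using H[rule_format, of "Suc i"] Suc L
          by (simp add: zc vc sc rot_q_def rot_v_def nth_append)
      qed
    qed
    moreover have "rotate1 \<sigma> = rank (rot_v v)" using rank_rot affine.IH by simp
    moreover have "distinct \<sigma>" using affine.IH by blast
    then have "distinct (rotate1 \<sigma>)" by simp
    moreover have "length (rot_q q z) = N" "length (rot_v v) = N" "length (rotate1 \<sigma>) = N"
      using L Suc by (simp_all add: zc vc sc rot_q_def rot_v_def)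
    ultimately show ?thesis by blast
  qed
qed

theorem mainTheorem20:
  fixes lam :: "nat list" and N :: nat and q s :: "'a::field"
  assumes "is_partition lam N"
    and "(T, z, v, \<sigma>) \<in> YB_vertices lam N q s"
  shows "\<sigma> = rank v \<and>
         (\<forall>i\<in>{1..N}. z ! (i - 1) = q ^ (v ! (i - 1)) * s powi CT lam T (\<sigma> ! (i - 1)))"
proof -
  have I: "length z = N \<and> length v = N \<and> length \<sigma> = N \<and> distinct \<sigma> \<and> \<sigma> = rank v \<and>
         (\<forall>i<N. z ! i = q ^ (v ! i) * s powi CT lam T (\<sigma> ! i))" by (rule inv[OF assms(2)])
  show ?thesis
  proof
    show "\<sigma> = rank v" using I by blast
    show "\<forall>i\<in>{1..N}. z ! (i - 1) = q ^ (v ! (i - 1)) * s powi CT lam T (\<sigma> ! (i - 1))"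
    proof
      fix i assume "i \<in> {1..N}"
      then have "i - 1 < N" by auto
      then show "z ! (i - 1) = q ^ (v ! (i - 1)) * s powi CT lam T (\<sigma> ! (i - 1))" using I by blast
    qed
  qed
qed

end
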